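(* Let $m\in\mathbb{N}$, $\gamma_k,\gamma_j>0$. Suppose $r_k$ and $r_j$ are observed ($r_k\neq r_j$) and $i_k,i_j$ are unobserved, with $i_k=r_k-X_k$, $i_j=r_j-X_j$, where $X_k\sim\mathrm{Erlang}(m,\gamma_k)$ and $X_j\sim\mathrm{Erlang}(m,\gamma_j)$ are independent. Let $c_{kj}=\gamma_k/(\gamma_k+\gamma_j)$. Then, if $r_j<r_k$, $$\mathbb{E}[\tau_{kj}]=\sum_{l_1=0}^{m-1}P_{\gamma_k(r_k-r_j)}(l_1)\sum_{l_2=0}^{m-l_1-1}\binom{m+l_2-1}{l_2}c_{kj}^{l_2}(1-c_{kj})^{m}\,(m-l_1-l_2)\,\gamma_k^{-1},$$ and if $r_j>r_k$, $$\mathbb{E}[\tau_{kj}]=\sum_{l_1=0}^{m-1}P_{\gamma_j(r_j-r_k)}(l_1)\sum_{l_2=0}^{m-1}\binom{m-l_1-1+l_2}{l_2}c_{kj}^{l_2}(1-c_{kj})^{m-l_1}\,(m-l_2)\,\gamma_k^{-1}\;+\;F_{\gamma_j,m}(r_j-r_k)\,m\,\gamma_k^{-1}.$$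
   Context: Each individual $\ell$ has infection time $i_\ell$ and removal time $r_\ell$ with $X_\ell=r_\ell-i_\ell$. The infective time pressure is $\tau_{kj}:=\min(r_k,i_j)-\min(i_j,i_k)$; the expectation is over the unobserved infection times given the observed removal times. $\mathrm{Erlang}(m,\gamma)$ is the Gamma distribution with integer shape $m$ and rate $\gamma$. $P_\lambda(l)=e^{-\lambda}\lambda^l/l!$ is the Poisson$(\lambda)$ probability mass function, and $F_{\gamma,m}(x)=\Pr(\mathrm{Erlang}(m,\gamma)\le x)$. *)

theory Defs
  imports "HOL-Probability.Probability"
begin

definition poisson_prob :: "real \<Rightarrow> nat \<Rightarrow> real" where
  "poisson_prob lam l = exp (- lam) * lam ^ l / fact l"

definition tau :: "real \<Rightarrow> real \<Rightarrow> real \<Rightarrow> real" where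
  "tau rk ik ij = min rk ij - min ij ik"

end

theory Submission imports Defs begin


lemma B0:
  fixes s :: real and n :: nat assumes s: "0 < s"
  shows "has_bochner_integral lborel (\<lambda>x. indicator {0..} x * x ^ n * exp (- s * x)) (fact n / s ^ Suc n)"
proof -
  have 1: "has_bochner_integral lborel (\<lambda>x. erlang_density 0 s x * x ^ n) (fact n / s ^ n)"
  proof (rule has_bochner_integral_nn_integral)
    show "(\<integral>\<^sup>+ x. ennreal (erlang_density 0 s x * x ^ n) \<partial>lborel) = ennreal (fact n / s ^ n)"
      using nn_integral_erlang_ith_moment[OF s, of 0 n] by simp
  qed (use s in \<open>auto simp: erlang_density_def\<close>)
  have 2: "(\<lambda>x. erlang_density 0 s x * x ^ n) = (\<lambda>x. s * (indicator {0..} x * x ^ n * exp (- s * x)))"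
    by (auto simp: erlang_density_def indicator_def)
  have "has_bochner_integral lborel (\<lambda>x. (1/s) * (s * (indicator {0..} x * x ^ n * exp (- s * x)))) ((1/s) * (fact n / s ^ n))"
    using has_bochner_integral_mult_right[OF 1[unfolded 2], of "1/s"] .
  then show ?thesis using s by (simp add: field_simps)
qed

lemma B1:
  fixes s d :: real and n :: nat assumes s: "0 < s"
  shows "has_bochner_integral lborel (\<lambda>x. indicator {d..} x * (x - d) ^ n * exp (- s * (x - d))) (fact n / s ^ Suc n)"
proof -
  have "has_bochner_integral lborel (\<lambda>x. (\<lambda>x. indicator {d..} x * (x - d) ^ n * exp (- s * (x - d))) (d + 1 * x)) ((fact n / s ^ Suc n) /\<^sub>R \<bar>1\<bar>)"
    using B0[OF s, of n] by (simp add: indicator_def)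
  then show ?thesis
    by (subst lborel_has_bochner_integral_real_affine_iff[where c=1 and t=d]) auto
qed


definition Tsum :: "nat \<Rightarrow> real \<Rightarrow> real \<Rightarrow> real" where
  "Tsum a g t = (\<Sum>i<a. poisson_prob (g * t) i * real (a - i) / g)"

lemma T_ptwise:
  fixes g t x :: real and a :: nat assumes g: "0 < g" and t: "0 \<le> t" and a: "1 \<le> a"
  shows "erlang_density (a - 1) g x * max 0 (x - t) =
    (\<Sum>j<a. (g ^ a / fact (a - 1) * real ((a - 1) choose j) * t ^ (a - 1 - j) * exp (- g * t)) *
       (indicator {t..} x * (x - t) ^ Suc j * exp (- g * (x - t))))"
proof (cases "x < t")
  case True
  then show ?thesis by (auto simp: erlang_density_def indicator_def)
next
  case False
  then have x0: "0 \<le> x" "t \<le> x" using t by auto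
  have Sa: "Suc (a - 1) = a" using a by simp
  have "x ^ (a - 1) = ((x - t) + t) ^ (a - 1)" by simp
  also have "\<dots> = (\<Sum>j\<le>a-1. real ((a - 1) choose j) * (x - t) ^ j * t ^ (a - 1 - j))"
    by (rule binomial_ring)
  finally have bx: "x ^ (a - 1) = (\<Sum>j<a. real ((a - 1) choose j) * (x - t) ^ j * t ^ (a - 1 - j))"
    using a by (metis Sa lessThan_Suc_atMost)
  have e: "exp (- g * x) = exp (- g * t) * exp (- g * (x - t))"
    using mult_exp_exp[of "- g * t" "- g * (x - t)"] by (simp add: algebra_simps)
  have "erlang_density (a - 1) g x * max 0 (x - t) = g ^ a / fact (a - 1) * x ^ (a - 1) * exp (- g * x) * (x - t)"
    using x0 a by (simp add: erlang_density_def power_Suc[symmetric])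
  also have "\<dots> = (\<Sum>j<a. (g ^ a / fact (a - 1) * real ((a - 1) choose j) * t ^ (a - 1 - j) * exp (- g * t)) *
       (indicator {t..} x * (x - t) ^ Suc j * exp (- g * (x - t))))"
    unfolding bx e sum_distrib_left sum_distrib_right
    by (rule sum.cong) (use x0 in \<open>auto simp: indicator_def\<close>)
  finally show ?thesis .
qed

lemma T_int:
  fixes g t :: real and a :: nat assumes g: "0 < g" and t: "0 \<le> t" and a: "1 \<le> a"
  shows "has_bochner_integral lborel (\<lambda>x. erlang_density (a - 1) g x * max 0 (x - t)) (Tsum a g t)"
proof -
  have "has_bochner_integral lborel (\<lambda>x. \<Sum>j<a. (g ^ a / fact (a - 1) * real ((a - 1) choose j) * t ^ (a - 1 - j) * exp (- g * t)) *
       (indicator {t..} x * (x - t) ^ Suc j * exp (- g * (x - t))))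
     (\<Sum>j<a. (g ^ a / fact (a - 1) * real ((a - 1) choose j) * t ^ (a - 1 - j) * exp (- g * t)) * (fact (Suc j) / g ^ Suc (Suc j)))"
    by (intro has_bochner_integral_sum has_bochner_integral_mult_right B1 g)
  moreover have "(\<Sum>j<a. (g ^ a / fact (a - 1) * real ((a - 1) choose j) * t ^ (a - 1 - j) * exp (- g * t)) * (fact (Suc j) / g ^ Suc (Suc j)))
     = Tsum a g t"
  proof -
    have "Tsum a g t = (\<Sum>j<a. poisson_prob (g * t) (a - Suc j) * real (a - (a - Suc j)) / g)"
      unfolding Tsum_def by (rule sum.nat_diff_reindex[symmetric])
    also have "\<dots> = (\<Sum>j<a. (g ^ a / fact (a - 1) * real ((a - 1) choose j) * t ^ (a - 1 - j) * exp (- g * t)) * (fact (Suc j) / g ^ Suc (Suc j)))"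
    proof (rule sum.cong[OF refl])
      fix j assume j: "j \<in> {..<a}"
      then obtain i where ai: "a = i + j + 1" by (metis lessThan_iff less_imp_Suc_add add.commute Suc_eq_plus1 add.assoc)
      have c: "real ((i + j) choose j) = fact (i + j) / (fact j * fact i)"
        by (subst binomial_fact) auto
      show "poisson_prob (g * t) (a - Suc j) * real (a - (a - Suc j)) / g =
        g ^ a / fact (a - 1) * real ((a - 1) choose j) * t ^ (a - 1 - j) * exp (- g * t) * (fact (Suc j) / g ^ Suc (Suc j))"
        unfolding ai using g
        by (simp add: c poisson_prob_def power_add power_mult_distrib field_simps)
    qed
    finally show ?thesis by simp
  qed
  moreover have "(\<lambda>x. erlang_density (a - 1) g x * max 0 (x - t)) = (\<lambda>x. \<Sum>j<a. (g ^ a / fact (a - 1) * real ((a - 1) choose j) * t ^ (a - 1 - j) * exp (- g * t)) *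
       (indicator {t..} x * (x - t) ^ Suc j * exp (- g * (x - t))))"
    by (rule ext, rule T_ptwise[OF g t a])
  ultimately show ?thesis by simp
qed




lemma Outer1_ptwise:
  fixes gk gj d y :: real and m :: nat
  assumes m: "m = Suc m'" and gk: "0 < gk" and gj: "0 < gj"
  shows "erlang_density (m - 1) gj y * Tsum m gk (d + y) =
    (\<Sum>i<m. \<Sum>l\<le>i. (real (i choose l) * d ^ l * gk ^ i * gj ^ m * exp (- gk * d) / (fact m' * fact i) * real (m - i) / gk) *
        (indicator {0..} y * y ^ (m' + (i - l)) * exp (- (gk + gj) * y)))" (is "_ = ?R")
proof (cases "y < 0")
  case True then show ?thesis by (simp add: erlang_density_def indicator_def)
next
  case False
  then have y: "0 \<le> y" by simp
  have fjy: "erlang_density (m - 1) gj y = gj ^ m * y ^ m' * exp (- gj * y) / fact m'"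
    using y by (simp add: erlang_density_def m del: power_Suc)
  have "erlang_density (m - 1) gj y * Tsum m gk (d + y) =
     (\<Sum>i<m. erlang_density (m - 1) gj y * (poisson_prob (gk * (d + y)) i * real (m - i) / gk))"
    by (simp add: Tsum_def sum_distrib_left)
  also have "\<dots> = ?R"
  proof (rule sum.cong[OF refl])
    fix i assume "i \<in> {..<m}"
    have "poisson_prob (gk * (d + y)) i * real (m - i) / gk
       = (exp (- gk * (d + y)) * gk ^ i / fact i * real (m - i) / gk) * (d + y) ^ i"
      by (simp add: poisson_prob_def power_mult_distrib)
    also have "\<dots> = (\<Sum>l\<le>i. (exp (- gk * (d + y)) * gk ^ i / fact i * real (m - i) / gk) * (real (i choose l) * d ^ l * y ^ (i - l)))"
      by (simp add: binomial_ring sum_distrib_left)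
    finally have 1: "poisson_prob (gk * (d + y)) i * real (m - i) / gk = \<dots>" .
    show "erlang_density (m - 1) gj y * (poisson_prob (gk * (d + y)) i * real (m - i) / gk) =
      (\<Sum>l\<le>i. (real (i choose l) * d ^ l * gk ^ i * gj ^ m * exp (- gk * d) / (fact m' * fact i) * real (m - i) / gk) *
        (indicator {0..} y * y ^ (m' + (i - l)) * exp (- (gk + gj) * y)))"
      unfolding 1 sum_distrib_left
    proof (rule sum.cong[OF refl])
      fix l assume "l \<in> {..i}"
      then obtain j where ij: "i = l + j" by (metis atMost_iff le_iff_add)
      show "erlang_density (m - 1) gj y * (exp (- gk * (d + y)) * gk ^ i / fact i * real (m - i) / gk * (real (i choose l) * d ^ l * y ^ (i - l))) =
         (real (i choose l) * d ^ l * gk ^ i * gj ^ m * exp (- gk * d) / (fact m' * fact i) * real (m - i) / gk) *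
        (indicator {0..} y * y ^ (m' + (i - l)) * exp (- (gk + gj) * y))"
        unfolding fjy using y gk gj ij
        by (simp add: power_add exp_add exp_diff exp_minus algebra_simps field_simps)
    qed
  qed
  finally show ?thesis .
qed


lemma Outer1:
  fixes gk gj d :: real and m :: nat
  assumes m1: "1 \<le> m" and gk: "0 < gk" and gj: "0 < gj"
  shows "has_bochner_integral lborel (\<lambda>y. erlang_density (m - 1) gj y * Tsum m gk (d + y))
    (\<Sum>l1=0..m-1. poisson_prob (gk * d) l1 *
               (\<Sum>l2=0..m-l1-1. real ((m + l2 - 1) choose l2) * (gk / (gk + gj)) ^ l2 * (1 - gk / (gk + gj)) ^ m
                  * real (m - l1 - l2) / gk))"
proof -
  obtain m' where m: "m = Suc m'" using m1 by (metis Suc_le_D One_nat_def)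
  define K where "K i l = real (i choose l) * d ^ l * gk ^ i * gj ^ m * exp (- gk * d) / (fact m' * fact i) * real (m - i) / gk" for i l :: nat
  define F where "F l1 l2 = poisson_prob (gk * d) l1 *
     (real ((m + l2 - 1) choose l2) * (gk / (gk + gj)) ^ l2 * (1 - gk / (gk + gj)) ^ m * real (m - l1 - l2) / gk)" for l1 l2 :: nat
  have s: "0 < gk + gj" using gk gj by simp
  have int: "has_bochner_integral lborel (\<lambda>y. \<Sum>i<m. \<Sum>l\<le>i. K i l * (indicator {0..} y * y ^ (m' + (i - l)) * exp (- (gk + gj) * y)))
     (\<Sum>i<m. \<Sum>l\<le>i. K i l * (fact (m' + (i - l)) / (gk + gj) ^ Suc (m' + (i - l))))"
    by (intro has_bochner_integral_sum has_bochner_integral_mult_right B0 s)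
  have fun_eq: "(\<lambda>y. erlang_density (m - 1) gj y * Tsum m gk (d + y)) =
     (\<lambda>y. \<Sum>i<m. \<Sum>l\<le>i. K i l * (indicator {0..} y * y ^ (m' + (i - l)) * exp (- (gk + gj) * y)))"
    unfolding K_def by (rule ext, rule Outer1_ptwise[OF m gk gj])
  have "(\<Sum>i<m. \<Sum>l\<le>i. K i l * (fact (m' + (i - l)) / (gk + gj) ^ Suc (m' + (i - l))))
      = (\<Sum>i<m. \<Sum>l\<le>i. F l (i - l))"
  proof (intro sum.cong refl)
    fix i l assume "i \<in> {..<m}" "l \<in> {..i}"
    then obtain j where ij: "i = l + j" by (metis atMost_iff le_iff_add)
    have c1: "real ((j + l) choose l) = fact (j + l) / (fact l * fact j)"
      by (subst binomial_fact) auto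
    have c2: "real ((j + m') choose j) = fact (j + m') / (fact j * fact m')"
      by (subst binomial_fact) auto
    have c3: "1 - gk / (gk + gj) = gj / (gk + gj)" using s by (simp add: field_simps)
    show "K i l * (fact (m' + (i - l)) / (gk + gj) ^ Suc (m' + (i - l))) = F l (i - l)"
      unfolding K_def F_def ij m using gk gj s
      by (simp add: c1 c2 c3 poisson_prob_def power_add power_mult_distrib power_divide field_simps)
  qed
  also have "\<dots> = (\<Sum>(i, j)\<in>{(i, j). i + j < m}. F i j)"
    by (rule sum.triangle_reindex[symmetric])
  also have "{(i, j). i + j < m} = Sigma {0..m-1} (\<lambda>l1. {0..m-l1-1})"
    using m by auto
  also have "(\<Sum>(i, j)\<in>Sigma {0..m-1} (\<lambda>l1. {0..m-l1-1}). F i j) = (\<Sum>l1=0..m-1. \<Sum>l2=0..m-l1-1. F l1 l2)"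
    by (rule sum.Sigma[symmetric]) auto
  finally have val: "(\<Sum>i<m. \<Sum>l\<le>i. K i l * (fact (m' + (i - l)) / (gk + gj) ^ Suc (m' + (i - l))))
      = (\<Sum>l1=0..m-1. \<Sum>l2=0..m-l1-1. F l1 l2)" .
  show ?thesis
    using int unfolding fun_eq[symmetric] val F_def by (simp add: sum_distrib_left)
qed


lemma Tsum0:
  assumes "1 \<le> m" shows "Tsum m g 0 = real m / g"
proof -
  obtain m' where m: "m = Suc m'" using assms by (metis Suc_le_D One_nat_def)
  show ?thesis unfolding Tsum_def poisson_prob_def m lessThan_Suc_eq_insert_0
    by (simp add: sum.reindex)
qed

lemma CDF_int:
  fixes g d :: real assumes g: "0 < g"
  shows "has_bochner_integral lborel (\<lambda>y. indicator {..<d} y * erlang_density k g y) (erlang_CDF k g d)"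
proof (rule has_bochner_integral_nn_integral)
  have "(\<integral>\<^sup>+ y. ennreal (indicator {..<d} y * erlang_density k g y) \<partial>lborel) =
        (\<integral>\<^sup>+ y. ennreal (erlang_density k g y) * indicator {..d} y \<partial>lborel)"
    by (rule nn_integral_cong_AE) (use AE_lborel_singleton[of d] in \<open>auto simp: indicator_def\<close>)
  also have "\<dots> = ennreal (erlang_CDF k g d)" by (rule nn_integral_erlang_density[OF g])
  finally show "(\<integral>\<^sup>+ y. ennreal (indicator {..<d} y * erlang_density k g y) \<partial>lborel) = ennreal (erlang_CDF k g d)" .
qed (use g in \<open>auto\<close>)


lemma Outer2_ptwise:
  fixes gk gj d y :: real and m :: nat
  assumes m: "m = Suc m'" and gk: "0 < gk" and gj: "0 < gj" and d: "0 < d"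
  shows "erlang_density (m - 1) gj y * Tsum m gk (max 0 (y - d)) =
    (\<Sum>l1\<le>m'. \<Sum>l2\<le>m'. (real (m' choose l1) * d ^ l1 * gj ^ m * exp (- gj * d) / fact m' * gk ^ l2 / fact l2 * real (m - l2) / gk) *
        (indicator {d..} y * (y - d) ^ (m' - l1 + l2) * exp (- (gk + gj) * (y - d))))
    + indicator {..<d} y * erlang_density (m - 1) gj y * (real m / gk)" (is "_ = ?R")
proof (cases "y < d")
  case True then show ?thesis using Tsum0[of m gk] m by (simp add: indicator_def)
next
  case False
  then have y: "d \<le> y" "0 \<le> y" using d by auto
  have fjy: "erlang_density (m - 1) gj y = gj ^ m * y ^ m' * exp (- gj * y) / fact m'"
    using y by (simp add: erlang_density_def m del: power_Suc)
  have b: "y ^ m' = (\<Sum>l1\<le>m'. real (m' choose l1) * d ^ l1 * (y - d) ^ (m' - l1))"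
    using binomial_ring[of d "y - d" m'] by simp
  have T: "Tsum m gk (max 0 (y - d)) = (\<Sum>l2\<le>m'. poisson_prob (gk * (y - d)) l2 * real (m - l2) / gk)"
    using y unfolding Tsum_def m lessThan_Suc_atMost by simp
  have "erlang_density (m - 1) gj y * Tsum m gk (max 0 (y - d)) =
     (\<Sum>l1\<le>m'. \<Sum>l2\<le>m'. (gj ^ m * exp (- gj * y) / fact m' * (real (m' choose l1) * d ^ l1 * (y - d) ^ (m' - l1))) *
        (poisson_prob (gk * (y - d)) l2 * real (m - l2) / gk))" (is "_ = ?thesis_r")
  proof -
    have "erlang_density (m - 1) gj y * Tsum m gk (max 0 (y - d)) = (gj ^ m * exp (- gj * y) / fact m' * y ^ m') * Tsum m gk (max 0 (y - d))"
      unfolding fjy by (simp add: field_simps)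
    also have "\<dots> = ?thesis_r"
      by (simp only: b T sum_distrib_left[of "gj ^ m * exp (- gj * y) / fact m'"] sum_product)
    finally show ?thesis .
  qed
  also have "\<dots> = (\<Sum>l1\<le>m'. \<Sum>l2\<le>m'. (real (m' choose l1) * d ^ l1 * gj ^ m * exp (- gj * d) / fact m' * gk ^ l2 / fact l2 * real (m - l2) / gk) *
        (indicator {d..} y * (y - d) ^ (m' - l1 + l2) * exp (- (gk + gj) * (y - d))))"
  proof (intro sum.cong refl)
    fix l1 l2 assume "l1 \<in> {..m'}" "l2 \<in> {..m'}"
    then obtain r where r: "m' = l1 + r" by (metis atMost_iff le_iff_add)
    show "(gj ^ m * exp (- gj * y) / fact m' * (real (m' choose l1) * d ^ l1 * (y - d) ^ (m' - l1))) *
        (poisson_prob (gk * (y - d)) l2 * real (m - l2) / gk) =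
      (real (m' choose l1) * d ^ l1 * gj ^ m * exp (- gj * d) / fact m' * gk ^ l2 / fact l2 * real (m - l2) / gk) *
        (indicator {d..} y * (y - d) ^ (m' - l1 + l2) * exp (- (gk + gj) * (y - d)))"
      unfolding r poisson_prob_def power_mult_distrib using y gk gj
      by (simp add: power_add power_mult_distrib exp_add exp_diff exp_minus algebra_simps field_simps)
  qed
  finally show ?thesis using False by simp
qed

lemma Outer2:
  fixes gk gj d :: real and m :: nat
  assumes m1: "1 \<le> m" and gk: "0 < gk" and gj: "0 < gj" and d: "0 < d"
  shows "has_bochner_integral lborel (\<lambda>y. erlang_density (m - 1) gj y * Tsum m gk (max 0 (y - d)))
    ((\<Sum>l1=0..m-1. poisson_prob (gj * d) l1 *
               (\<Sum>l2=0..m-1. real ((m - l1 - 1 + l2) choose l2) * (gk / (gk + gj)) ^ l2 * (1 - gk / (gk + gj)) ^ (m - l1)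
                  * real (m - l2) / gk))
             + erlang_CDF (m - 1) gj d * real m / gk)"
proof -
  obtain m' where m: "m = Suc m'" using m1 by (metis Suc_le_D One_nat_def)
  define K where "K l1 l2 = real (m' choose l1) * d ^ l1 * gj ^ m * exp (- gj * d) / fact m' * gk ^ l2 / fact l2 * real (m - l2) / gk" for l1 l2 :: nat
  have s: "0 < gk + gj" using gk gj by simp
  have int: "has_bochner_integral lborel (\<lambda>y. (\<Sum>l1\<le>m'. \<Sum>l2\<le>m'. K l1 l2 *
        (indicator {d..} y * (y - d) ^ (m' - l1 + l2) * exp (- (gk + gj) * (y - d))))
    + indicator {..<d} y * erlang_density (m - 1) gj y * (real m / gk))
     ((\<Sum>l1\<le>m'. \<Sum>l2\<le>m'. K l1 l2 * (fact (m' - l1 + l2) / (gk + gj) ^ Suc (m' - l1 + l2)))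
      + erlang_CDF (m - 1) gj d * (real m / gk))"
    by (intro has_bochner_integral_add has_bochner_integral_sum has_bochner_integral_mult_right has_bochner_integral_mult_left B1 s CDF_int gj)
  have fun_eq: "(\<lambda>y. erlang_density (m - 1) gj y * Tsum m gk (max 0 (y - d))) =
     (\<lambda>y. (\<Sum>l1\<le>m'. \<Sum>l2\<le>m'. K l1 l2 *
        (indicator {d..} y * (y - d) ^ (m' - l1 + l2) * exp (- (gk + gj) * (y - d))))
    + indicator {..<d} y * erlang_density (m - 1) gj y * (real m / gk))"
    unfolding K_def by (rule ext, rule Outer2_ptwise[OF m gk gj d])
  have val: "(\<Sum>l1\<le>m'. \<Sum>l2\<le>m'. K l1 l2 * (fact (m' - l1 + l2) / (gk + gj) ^ Suc (m' - l1 + l2)))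
    = (\<Sum>l1=0..m-1. poisson_prob (gj * d) l1 *
               (\<Sum>l2=0..m-1. real ((m - l1 - 1 + l2) choose l2) * (gk / (gk + gj)) ^ l2 * (1 - gk / (gk + gj)) ^ (m - l1)
                  * real (m - l2) / gk))"
    unfolding m diff_Suc_1 atLeast0AtMost sum_distrib_left
  proof (intro sum.cong refl)
    fix l1 l2 assume "l1 \<in> {..m'}" "l2 \<in> {..m'}"
    then obtain r where r: "m' = l1 + r" by (metis atMost_iff le_iff_add)
    have c1: "real ((l1 + r) choose l1) = fact (l1 + r) / (fact l1 * fact r)"
      by (subst binomial_fact) auto
    have c2: "real ((r + l2) choose l2) = fact (r + l2) / (fact l2 * fact r)"
      by (subst binomial_fact) auto
    have c3: "1 - gk / (gk + gj) = gj / (gk + gj)" using s by (simp add: field_simps)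
    have e1: "Suc m' - l1 - 1 + l2 = r + l2" "Suc m' - l1 = Suc r" "m' - l1 + l2 = r + l2" using r by auto
      have c2': "real ((l2 + r) choose l2) = fact (l2 + r) / (fact l2 * fact r)"
      by (subst binomial_fact) auto
      show "K l1 l2 * (fact (m' - l1 + l2) / (gk + gj) ^ Suc (m' - l1 + l2)) =
      poisson_prob (gj * d) l1 * (real ((Suc m' - l1 - 1 + l2) choose l2) * (gk / (gk + gj)) ^ l2 * (1 - gk / (gk + gj)) ^ (Suc m' - l1) *
        real (Suc m' - l2) / gk)"
      unfolding K_def e1 c2 c3 unfolding r c1 using gk gj s
      by (simp add: m r c2' poisson_prob_def power_add power_mult_distrib power_divide field_simps)
  qed
  show ?thesis
    using int unfolding fun_eq[symmetric] val by simp
qed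


lemma fubini_nonneg:
  fixes h :: "real \<times> real \<Rightarrow> real"
  assumes h[measurable]: "h \<in> borel_measurable (lborel \<Otimes>\<^sub>M lborel)" and nn: "\<And>p. 0 \<le> h p"
    and inner: "\<And>y. has_bochner_integral lborel (\<lambda>x. h (x, y)) (I y)"
    and outer: "has_bochner_integral lborel I V"
  shows "integral\<^sup>L (lborel \<Otimes>\<^sub>M lborel) h = V"
proof -
  have PS: "pair_sigma_finite lborel lborel"
    by (simp add: pair_sigma_finite_def lborel.sigma_finite_measure_axioms)
  have I0: "0 \<le> I y" for y
  proof -
    have "I y = integral\<^sup>L lborel (\<lambda>x. h (x, y))"
      using inner[of y] by (simp add: has_bochner_integral_integral_eq)
    also have "0 \<le> \<dots>" using nn by simp
    finally show ?thesis by simp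
  qed
  have in_nn: "(\<integral>\<^sup>+x. ennreal (h (x, y)) \<partial>lborel) = ennreal (I y)" for y
  proof -
    have "integrable lborel (\<lambda>x. h (x, y))" "integral\<^sup>L lborel (\<lambda>x. h (x, y)) = I y"
      using inner[of y] by (auto simp: has_bochner_integral_iff)
    then show ?thesis
      using nn_integral_eq_integral[of lborel "\<lambda>x. h (x, y)"] nn by simp
  qed
  have V0: "0 \<le> V"
  proof -
    have "V = integral\<^sup>L lborel I"
      using outer by (simp add: has_bochner_integral_integral_eq)
    also have "0 \<le> \<dots>" using I0 by simp
    finally show ?thesis by simp
  qed
  have out: "(\<integral>\<^sup>+y. ennreal (I y) \<partial>lborel) = ennreal V"
  proof -
    have "integrable lborel I" "integral\<^sup>L lborel I = V"
      using outer by (auto simp: has_bochner_integral_iff)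
    then show ?thesis
      using nn_integral_eq_integral[of lborel I] I0 by simp
  qed
  have hm: "(\<lambda>p. ennreal (h p)) \<in> borel_measurable (lborel \<Otimes>\<^sub>M lborel)" by measurable
  have "(\<integral>\<^sup>+p. ennreal (h p) \<partial>(lborel \<Otimes>\<^sub>M lborel)) = ennreal V"
    using pair_sigma_finite.nn_integral_snd[OF PS hm] in_nn out by simp
  then have "has_bochner_integral (lborel \<Otimes>\<^sub>M lborel) h V"
    by (intro has_bochner_integral_nn_integral) (auto simp: nn V0)
  then show ?thesis by (simp add: has_bochner_integral_iff)
qed

lemma tau1:
  fixes rk rj x y :: real assumes "rj - y < rk"
  shows "tau rk (rk - x) (rj - y) = max 0 (x - (rk - rj + y))"
  using assms by (simp add: tau_def min_def max_def)

lemma tau2: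
  fixes rk rj x y :: real assumes "0 \<le> x" "rk < rj"
  shows "tau rk (rk - x) (rj - y) = max 0 (x - max 0 (y - (rj - rk)))"
  using assms by (simp add: tau_def min_def max_def)

theorem mainTheorem6:
  fixes M :: "'a measure" and Xk Xj :: "'a \<Rightarrow> real"
    and m :: nat and \<gamma>k \<gamma>j rk rj :: real
  assumes "prob_space M"
    and "m \<ge> 1"
    and "\<gamma>k > 0" and "\<gamma>j > 0"
    and "rk \<noteq> rj"
    and "distributed M lborel Xk (erlang_density (m - 1) \<gamma>k)"
    and "distributed M lborel Xj (erlang_density (m - 1) \<gamma>j)"
    and "prob_space.indep_var M borel Xk borel Xj"
  defines "c \<equiv> \<gamma>k / (\<gamma>k + \<gamma>j)"
  shows "(rj < rk \<longrightarrow>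
           prob_space.expectation M (\<lambda>\<omega>. tau rk (rk - Xk \<omega>) (rj - Xj \<omega>)) =
             (\<Sum>l1=0..m-1. poisson_prob (\<gamma>k * (rk - rj)) l1 *
               (\<Sum>l2=0..m-l1-1. real ((m + l2 - 1) choose l2) * c ^ l2 * (1 - c) ^ m
                  * real (m - l1 - l2) / \<gamma>k)))
       \<and> (rj > rk \<longrightarrow>
           prob_space.expectation M (\<lambda>\<omega>. tau rk (rk - Xk \<omega>) (rj - Xj \<omega>)) =
             (\<Sum>l1=0..m-1. poisson_prob (\<gamma>j * (rj - rk)) l1 *
               (\<Sum>l2=0..m-1. real ((m - l1 - 1 + l2) choose l2) * c ^ l2 * (1 - c) ^ (m - l1)
                  * real (m - l2) / \<gamma>k))
             + erlang_CDF (m - 1) \<gamma>j (rj - rk) * real m / \<gamma>k)"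
proof -
  note P = assms(1) and m1 = assms(2) and gk = assms(3) and gj = assms(4)
  define fk where "fk = erlang_density (m - 1) \<gamma>k"
  define fj where "fj = erlang_density (m - 1) \<gamma>j"
  have fk0: "0 \<le> fk x" for x using gk by (simp add: fk_def)
  have fj0: "0 \<le> fj x" for x using gj by (simp add: fj_def)
  have sf: "sigma_finite_measure (lborel :: real measure)" ..
  have ind: "prob_space.indep_var M lborel Xk lborel Xj"
    using prob_space.indep_var_compose[OF P assms(8), of id lborel id lborel] by (simp add: comp_def)
  have "distributed M (lborel \<Otimes>\<^sub>M lborel) (\<lambda>x. (Xk x, Xj x)) (\<lambda>(x, y). ennreal (fk x) * ennreal (fj y))"
    using prob_space.distributed_joint_indep[OF P sf sf assms(6) assms(7) ind]
    unfolding fk_def fj_def by simp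
  moreover have "(\<lambda>(x, y). ennreal (fk x) * ennreal (fj y)) = (\<lambda>p. ennreal (fk (fst p) * fj (snd p)))"
    using fk0 fj0 by (auto simp: ennreal_mult)
  ultimately have joint: "distributed M (lborel \<Otimes>\<^sub>M lborel) (\<lambda>x. (Xk x, Xj x)) (\<lambda>p. ennreal (fk (fst p) * fj (snd p)))"
    by simp
  have E: "prob_space.expectation M (\<lambda>\<omega>. tau rk (rk - Xk \<omega>) (rj - Xj \<omega>)) =
      integral\<^sup>L (lborel \<Otimes>\<^sub>M lborel) (\<lambda>p. fk (fst p) * fj (snd p) * tau rk (rk - fst p) (rj - snd p))"
    using distributed_integral[OF joint, of "\<lambda>p. tau rk (rk - fst p) (rj - snd p)"] fk0 fj0
    unfolding tau_def by (simp add: mult.assoc)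
  have meas: "(\<lambda>p. fk (fst p) * fj (snd p) * tau rk (rk - fst p) (rj - snd p)) \<in> borel_measurable (lborel \<Otimes>\<^sub>M lborel)"
    unfolding fk_def fj_def tau_def by measurable
  have nn: "0 \<le> fk (fst p) * fj (snd p) * tau rk (rk - fst p) (rj - snd p)" for p
  proof (cases "fst p < 0")
    case True then show ?thesis by (simp add: fk_def erlang_density_def)
  next
    case False
    then have "0 \<le> tau rk (rk - fst p) (rj - snd p)" by (auto simp: tau_def)
    then show ?thesis using fk0 fj0 by simp
  qed
  show ?thesis
  proof (intro conjI impI)
    assume lt: "rj < rk"
    let ?d = "rk - rj"
    have inner: "has_bochner_integral lborel (\<lambda>x. fk (fst (x, y)) * fj (snd (x, y)) * tau rk (rk - fst (x, y)) (rj - snd (x, y)))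
        (fj y * Tsum m \<gamma>k (?d + y))" for y
    proof (cases "y < 0")
      case True
      then show ?thesis by (simp add: fj_def erlang_density_def has_bochner_integral_zero)
    next
      case False
      have "(\<lambda>x. fk (fst (x, y)) * fj (snd (x, y)) * tau rk (rk - fst (x, y)) (rj - snd (x, y))) =
          (\<lambda>x. fj y * (erlang_density (m - 1) \<gamma>k x * max 0 (x - (?d + y))))"
        using False lt by (simp add: fk_def tau1 fun_eq_iff)
      moreover have "has_bochner_integral lborel (\<lambda>x. fj y * (erlang_density (m - 1) \<gamma>k x * max 0 (x - (?d + y)))) (fj y * Tsum m \<gamma>k (?d + y))"
        by (intro has_bochner_integral_mult_right T_int gk m1) (use False lt in simp)
      ultimately show ?thesis by (simp only:)
    qed
    have outer: "has_bochner_integral lborel (\<lambda>y. fj y * Tsum m \<gamma>k (?d + y))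
      (\<Sum>l1=0..m-1. poisson_prob (\<gamma>k * ?d) l1 *
               (\<Sum>l2=0..m-l1-1. real ((m + l2 - 1) choose l2) * c ^ l2 * (1 - c) ^ m
                  * real (m - l1 - l2) / \<gamma>k))"
      unfolding fj_def c_def by (rule Outer1[OF m1 gk gj])
    show "prob_space.expectation M (\<lambda>\<omega>. tau rk (rk - Xk \<omega>) (rj - Xj \<omega>)) =
             (\<Sum>l1=0..m-1. poisson_prob (\<gamma>k * (rk - rj)) l1 *
               (\<Sum>l2=0..m-l1-1. real ((m + l2 - 1) choose l2) * c ^ l2 * (1 - c) ^ m
                  * real (m - l1 - l2) / \<gamma>k))"
      unfolding E by (rule fubini_nonneg[OF meas nn inner outer])
  next
    assume lt: "rk < rj"
    let ?d = "rj - rk"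
    have inner: "has_bochner_integral lborel (\<lambda>x. fk (fst (x, y)) * fj (snd (x, y)) * tau rk (rk - fst (x, y)) (rj - snd (x, y)))
        (fj y * Tsum m \<gamma>k (max 0 (y - ?d)))" for y
    proof -
      have "(\<lambda>x. fk (fst (x, y)) * fj (snd (x, y)) * tau rk (rk - fst (x, y)) (rj - snd (x, y))) =
          (\<lambda>x. fj y * (erlang_density (m - 1) \<gamma>k x * max 0 (x - max 0 (y - ?d))))"
      proof
        fix x show "fk (fst (x, y)) * fj (snd (x, y)) * tau rk (rk - fst (x, y)) (rj - snd (x, y)) =
          fj y * (erlang_density (m - 1) \<gamma>k x * max 0 (x - max 0 (y - ?d)))"
        proof (cases "x < 0")
          case True then show ?thesis by (simp add: fk_def erlang_density_def)
        next
          case False then show ?thesis using lt by (simp add: fk_def tau2)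
        qed
      qed
      moreover have "has_bochner_integral lborel (\<lambda>x. fj y * (erlang_density (m - 1) \<gamma>k x * max 0 (x - max 0 (y - ?d)))) (fj y * Tsum m \<gamma>k (max 0 (y - ?d)))"
        by (intro has_bochner_integral_mult_right T_int gk m1) simp
      ultimately show ?thesis by (simp only:)
    qed
    have outer: "has_bochner_integral lborel (\<lambda>y. fj y * Tsum m \<gamma>k (max 0 (y - ?d)))
      ((\<Sum>l1=0..m-1. poisson_prob (\<gamma>j * ?d) l1 *
               (\<Sum>l2=0..m-1. real ((m - l1 - 1 + l2) choose l2) * c ^ l2 * (1 - c) ^ (m - l1)
                  * real (m - l2) / \<gamma>k))
             + erlang_CDF (m - 1) \<gamma>j ?d * real m / \<gamma>k)"
      unfolding fj_def c_def by (rule Outer2[OF m1 gk gj]) (use lt in simp)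
    show "prob_space.expectation M (\<lambda>\<omega>. tau rk (rk - Xk \<omega>) (rj - Xj \<omega>)) =
             (\<Sum>l1=0..m-1. poisson_prob (\<gamma>j * (rj - rk)) l1 *
               (\<Sum>l2=0..m-1. real ((m - l1 - 1 + l2) choose l2) * c ^ l2 * (1 - c) ^ (m - l1)
                  * real (m - l2) / \<gamma>k))
             + erlang_CDF (m - 1) \<gamma>j (rj - rk) * real m / \<gamma>k"
      unfolding E by (rule fubini_nonneg[OF meas nn inner outer])
  qed
qed

end
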